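(* Let $M,N$ be complete pointed metric spaces and $f\colon M\to N$ a Lipschitz map with $f(0_M)=0_N$. Suppose: $(P_1)$ for every bounded $S\subset M$, $f(S)$ is totally bounded in $N$; $(P_2)$ $\displaystyle\lim_{d(x,y)\to0}\frac{d(f(x),f(y))}{d(x,y)}=0$ (uniform local flatness); $(P_4)$ $f$ is flat at infinity: $\displaystyle\lim_{d(x,0_M)\to\infty,\ d(y,0_M)\to\infty}\frac{d(f(x),f(y))}{d(x,y)}=0$ (limit over pairs $x\neq y$), i.e. for every $\varepsilon>0$ there is $R>0$ such that $d(f(x),f(y))\le\varepsilon d(x,y)$ whenever $x\neq y$ and $d(x,0_M),d(y,0_M)\ge R$. Then $\widehat f\colon\mathcal F(M)\to\mathcal F(N)$ is compact.
   Context: Scalars are $\mathbb K=\mathbb R$ or $\mathbb C$. For a pointed metric space $(M,d,0_M)$, $\mathrm{Lip}_0(M)$ denotes the Banach space of Lipschitz functions $g\colon M\to\mathbb K$ with $g(0_M)=0$ normed by the best Lipschitz constant; $\delta(x)\in\mathrm{Lip}_0(M)^*$ is evaluation at $x$; the Lipschitz-free space $\mathcal F(M)$ is the norm-closed linear span of $\{\delta(x):x\in M\}$ in $\mathrm{Lip}_0(M)^*$. For a Lipschitz map $f\colon M\to N$ with $f(0_M)=0_N$, $\widehat f\colon\mathcal F(M)\to\mathcal F(N)$ is the unique bounded linear operator with $\widehat f(\delta(x))=\delta(f(x))$ for all $x\in M$. *)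

theory Defs
  imports "HOL-Analysis.Analysis"
begin

text \<open>Scalars: a type 'k of class real_normed_field and banach (complete normed fields
  over the reals, i.e. R or C up to isomorphism). A pointed metric space is a type of
  class metric_space together with a base point p.\<close>

definition Lip0 :: "'a::metric_space \<Rightarrow> ('a \<Rightarrow> 'k::real_normed_field) set" where
  "Lip0 p = {g. (\<exists>L. L-lipschitz_on UNIV g) \<and> g p = 0}"

definition Lip0_ball :: "'a::metric_space \<Rightarrow> ('a \<Rightarrow> 'k::real_normed_field) set" where
  "Lip0_ball p = {g. 1-lipschitz_on UNIV g \<and> g p = 0}"

definition Lip0_dual :: "'a::metric_space \<Rightarrow> (('a \<Rightarrow> 'k::real_normed_field) \<Rightarrow> 'k) set" where
  "Lip0_dual p = {\<phi>.
     (\<forall>c g h. g \<in> Lip0 p \<longrightarrow> h \<in> Lip0 p \<longrightarrow> \<phi> (\<lambda>x. c * g x + h x) = c * \<phi> g + \<phi> h) \<and>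
     (\<exists>C. \<forall>g\<in>Lip0_ball p. norm (\<phi> g) \<le> C)}"

definition dual_norm :: "'a::metric_space \<Rightarrow> (('a \<Rightarrow> 'k::real_normed_field) \<Rightarrow> 'k) \<Rightarrow> real" where
  "dual_norm p \<phi> = (SUP g\<in>Lip0_ball p. norm (\<phi> g))"

definition delta :: "'a \<Rightarrow> (('a \<Rightarrow> 'k) \<Rightarrow> 'k)" where
  "delta x = (\<lambda>g. g x)"

definition delta_span :: "(('a \<Rightarrow> 'k::real_normed_field) \<Rightarrow> 'k) set" where
  "delta_span = {\<phi>. \<exists>(n::nat) c xs. \<phi> = (\<lambda>g. \<Sum>i<n. c i * delta (xs i) g)}"

text \<open>Lipschitz-free space F(M): norm closure of the span of the deltas in Lip_0(M)^*.\<close>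
definition FreeSp :: "'a::metric_space \<Rightarrow> (('a \<Rightarrow> 'k::real_normed_field) \<Rightarrow> 'k) set" where
  "FreeSp p = {\<phi> \<in> Lip0_dual p. \<forall>e>0. \<exists>\<psi>\<in>delta_span. dual_norm p (\<phi> - \<psi>) < e}"

text \<open>The linearization f-hat: the bounded linear operator with f-hat(delta x) = delta (f x),
  given explicitly by f-hat(mu)(g) = mu(g o f).\<close>
definition lift :: "('a \<Rightarrow> 'b) \<Rightarrow> (('a \<Rightarrow> 'k) \<Rightarrow> 'k) \<Rightarrow> (('b \<Rightarrow> 'k) \<Rightarrow> 'k)" where
  "lift f \<mu> = (\<lambda>g. \<mu> (g \<circ> f))"

definition compact_free_op ::
  "'a::metric_space \<Rightarrow> 'b::metric_space \<Rightarrow>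
   ((('a \<Rightarrow> 'k::real_normed_field) \<Rightarrow> 'k) \<Rightarrow> (('b \<Rightarrow> 'k) \<Rightarrow> 'k)) \<Rightarrow> bool" where
  "compact_free_op p q T \<longleftrightarrow>
     T ` FreeSp p \<subseteq> FreeSp q \<and>
     (\<forall>\<mu>::nat \<Rightarrow> _. (\<forall>n. \<mu> n \<in> FreeSp p \<and> dual_norm p (\<mu> n) \<le> 1) \<longrightarrow>
        (\<exists>(r::nat \<Rightarrow> nat) \<nu>. strict_mono r \<and> \<nu> \<in> FreeSp q \<and>
           (\<lambda>n. dual_norm q (T (\<mu> (r n)) - \<nu>)) \<longlonglongrightarrow> 0))"

end

theory Submission
  imports Defs "HOL-Computational_Algebra.Fundamental_Theorem_Algebra" "HOL-Library.Diagonal_Subsequence"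
begin


lemma mpr_mult: "map_poly (of_real::real\<Rightarrow>'a::{real_algebra_1,comm_ring_1}) (p*q) = map_poly of_real p * map_poly of_real q"
  by (intro poly_eqI) (simp add: coeff_map_poly coeff_mult of_real_sum)

lemma mpr_diff: "map_poly (of_real::real\<Rightarrow>'a::{real_algebra_1,comm_ring_1}) (p - q) = map_poly of_real p - map_poly of_real q"
  by (intro poly_eqI) (simp add: coeff_map_poly)

lemma mpr_power: "map_poly (of_real::real\<Rightarrow>'a::{real_algebra_1,comm_ring_1}) (p ^ n) = (map_poly of_real p) ^ n"
  by (induction n) (simp_all add: mpr_mult)

lemma mpr_prod_mset: "map_poly (of_real::real\<Rightarrow>'a::{real_algebra_1,comm_ring_1}) (\<Prod>x\<in>#A. h x) = (\<Prod>x\<in>#A. map_poly of_real (h x))"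
  by (induction A) (simp_all add: mpr_mult)

lemma mpr_const: "map_poly (of_real::real\<Rightarrow>'a::{real_algebra_1,comm_ring_1}) [:c:] = [:of_real c:]"
  by (simp add: map_poly_pCons)

lemma mpr_inj: "map_poly (of_real::real\<Rightarrow>'a::{real_algebra_1,comm_ring_1}) p = map_poly of_real q \<Longrightarrow> p = q"
  by (metis coeff_map_poly of_real_0 of_real_eq_iff poly_eqI)

lemma mpc_mult: "map_poly cnj (p*q) = map_poly cnj p * map_poly cnj q"
  by (intro poly_eqI) (simp add: coeff_map_poly coeff_mult)

lemma mpc_prod_mset: "map_poly cnj (\<Prod>x\<in>#A. h x) = (\<Prod>x\<in>#A. map_poly cnj (h x))"
  by (induction A) (simp_all add: mpc_mult)

definition qp :: "complex \<Rightarrow> real poly" where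
  "qp z = [:(cmod z)^2, -2 * Re z, 1:]"

lemma qp_factor: "map_poly of_real (qp z) = [:-z, 1:] * [:-cnj z, 1:]"
  using cmod_power2[of z] by (simp add: qp_def map_poly_pCons complex_eq_iff power2_eq_square)

lemma poly_qp: "poly (map_poly (of_real::real\<Rightarrow>'a::{real_algebra_1,comm_ring_1}) (qp z)) x = x*x - of_real (2*Re z) * x + of_real ((cmod z)^2)"
  by (simp add: qp_def map_poly_pCons algebra_simps)


lemma mpr_add: "map_poly (of_real::real\<Rightarrow>'a::{real_algebra_1,comm_ring_1}) (p + q) = map_poly of_real p + map_poly of_real q"
  by (intro poly_eqI) (simp add: coeff_map_poly)

lemma norm_prod_mset_k: "norm (\<Prod>x\<in>#A. h x) = (\<Prod>x\<in>#A. norm (h x :: 'k::real_normed_field))"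
  by (induction A) (simp_all add: norm_mult)

lemma prod_mset_ge_pow:
  assumes "\<And>x. x \<in># A \<Longrightarrow> (m::real) \<le> h x" "0 \<le> m"
  shows "m ^ size A \<le> (\<Prod>x\<in>#A. h x)"
  using assms
proof (induction A)
  case empty then show ?case by simp
next
  case (add x A)
  have "m ^ size A \<le> (\<Prod>x\<in>#A. h x)" using add by auto
  moreover have "m \<le> h x" using add by auto
  ultimately show ?case using add.prems(2)
    by (simp add: mult_mono mult.commute)
qed

lemma key_ineq:
  fixes \<xi> :: "'k::real_normed_field"
  defines "F \<equiv> (\<lambda>z. norm (\<xi>*\<xi> - of_real (2*Re z) * \<xi> + of_real ((cmod z)^2)))"
  assumes n: "n \<ge> 1" and m: "m > 0" and z0: "F z0 = m" and minF: "\<And>z. F z \<ge> m"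
    and eps: "\<epsilon> > 0"
  shows "F (Complex (Re z0) (sqrt ((Im z0)^2 + \<epsilon>))) * m^(2*n-1) \<le> (m^n + \<epsilon>^n)^2"
proof -
  define z1 where "z1 = Complex (Re z0) (sqrt ((Im z0)^2 + \<epsilon>))"
  define q0 where "q0 = qp z0"
  define c where "c = - ((-\<epsilon>)^n)"
  define G where "G = q0^n + [:c:]"
  define E where "E = \<xi>*\<xi> - of_real (2*Re z0) * \<xi> + of_real ((cmod z0)^2)"
  have nE: "norm E = m" using z0 by (simp add: F_def E_def)
  have evG: "poly (map_poly of_real G) \<xi> = E^n + of_real c"
    by (simp add: G_def mpr_add mpr_power mpr_const q0_def poly_qp E_def)
  have bound: "norm (poly (map_poly of_real G) \<xi>) \<le> m^n + \<epsilon>^n"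
  proof -
    have "norm (E^n + of_real c) \<le> norm (E^n) + norm (of_real c :: 'k)" by (rule norm_triangle_ineq)
    also have "\<dots> = m^n + \<epsilon>^n" using eps by (simp add: norm_power nE c_def power_abs)
    finally show ?thesis by (simp add: evG)
  qed
  have q0nz: "q0 \<noteq> 0" and dq0: "degree q0 = 2" and lq0: "lead_coeff q0 = 1"
    by (simp_all add: q0_def qp_def)
  have dG: "degree G = 2*n" and lG: "lead_coeff G = 1"
  proof -
    have d1: "degree (q0^n) = 2*n" using q0nz dq0 by (simp add: degree_power_eq)
    have lt: "degree [:c:] < degree (q0^n)" using d1 n by simp
    show "degree G = 2*n" unfolding G_def using degree_add_eq_left[OF lt] d1 by simp
    have "lead_coeff G = lead_coeff (q0^n)" unfolding G_def
      using lead_coeff_add_le[of "[:c:]" "q0^n"] lt by (simp add: add.commute)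
    then show "lead_coeff G = 1" by (simp add: lead_coeff_power lq0)
  qed
  define Gc where "Gc = (map_poly of_real G :: complex poly)"
  have dGc: "degree Gc = 2*n" unfolding Gc_def by (subst degree_map_poly) (simp_all add: dG)
  have lGc: "lead_coeff Gc = 1" unfolding Gc_def
    by (subst degree_map_poly) (simp_all add: coeff_map_poly lG)
  have Gcnz: "Gc \<noteq> 0" using lGc by auto
  define R where "R = proots Gc"
  have sR: "size R = 2*n" unfolding R_def by (simp add: size_proots_complex dGc)
  have dec: "Gc = (\<Prod>x\<in>#R. [:-x, 1:])"
    using complex_poly_decompose_multiset[of Gc] lGc by (simp add: R_def)
  have cnjG: "map_poly cnj Gc = Gc" unfolding Gc_def
    by (intro poly_eqI) (simp add: coeff_map_poly)
  have dec2: "Gc = (\<Prod>x\<in>#R. [:-cnj x, 1:])"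
  proof -
    have "map_poly cnj Gc = (\<Prod>x\<in>#R. map_poly cnj [:-x, 1:])"
      by (subst dec) (simp add: mpc_prod_mset)
    also have "\<dots> = (\<Prod>x\<in>#R. [:-cnj x, 1:])" by (simp add: map_poly_pCons)
    finally show ?thesis using cnjG by simp
  qed
  have "Gc * Gc = (\<Prod>x\<in>#R. [:-x, 1:]) * (\<Prod>x\<in>#R. [:-cnj x, 1:])"
    using dec dec2 by metis
  also have "\<dots> = (\<Prod>x\<in>#R. [:-x, 1:] * [:-cnj x, 1:])"
    by (rule prod_mset.distrib[symmetric])
  also have "\<dots> = (\<Prod>x\<in>#R. map_poly of_real (qp x))" by (simp add: qp_factor)
  also have "\<dots> = map_poly of_real (\<Prod>x\<in>#R. qp x)" by (simp add: mpr_prod_mset)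
  finally have "map_poly of_real (G*G) = (map_poly of_real (\<Prod>x\<in>#R. qp x) :: complex poly)"
    by (simp add: mpr_mult Gc_def)
  then have GG: "G*G = (\<Prod>x\<in>#R. qp x)" by (rule mpr_inj)
  have "(norm (poly (map_poly of_real G) \<xi>))^2 = norm (poly (map_poly of_real (G*G)) \<xi>)"
    by (simp add: mpr_mult norm_mult power2_eq_square)
  also have "\<dots> = (\<Prod>x\<in>#R. F x)"
    by (simp add: GG mpr_prod_mset poly_prod_mset norm_prod_mset_k poly_qp F_def)
  finally have eqn: "(norm (poly (map_poly of_real G) \<xi>))^2 = (\<Prod>x\<in>#R. F x)" .
  have root: "poly Gc z1 = 0"
  proof -
    have "poly (map_poly of_real q0) z1 = - of_real \<epsilon>"
      unfolding q0_def poly_qp z1_def using eps cmod_power2[of z0]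
      by (simp add: complex_eq_iff power2_eq_square)
    then show ?thesis
      by (simp add: Gc_def G_def mpr_add mpr_power mpr_const c_def)
  qed
  then have "z1 \<in># R" using Gcnz by (simp add: R_def)
  then obtain R' where R': "R = add_mset z1 R'" by (metis multi_member_split)
  have sR': "size R' = 2*n - 1" using sR R' by simp
  have "(\<Prod>x\<in>#R. F x) = F z1 * (\<Prod>x\<in>#R'. F x)" by (simp add: R')
  also have "\<dots> \<ge> F z1 * m^(2*n-1)"
    using prod_mset_ge_pow[of R' m F] minF m sR' by (auto intro!: mult_left_mono simp: F_def)
  finally have "F z1 * m^(2*n-1) \<le> (norm (poly (map_poly of_real G) \<xi>))^2" using eqn by simp
  also have "\<dots> \<le> (m^n + \<epsilon>^n)^2"
    using bound by (intro power_mono) auto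
  finally show ?thesis by (simp add: z1_def)
qed


lemma quad_root_exists:
  fixes \<xi> :: "'k::real_normed_field"
  shows "\<exists>z. \<xi>*\<xi> - of_real (2*Re z) * \<xi> + of_real ((cmod z)^2) = 0"
proof -
  define F where "F = (\<lambda>z. norm (\<xi>*\<xi> - of_real (2*Re z) * \<xi> + of_real ((cmod z)^2)))"
  define t where "t = norm \<xi>"
  define Rr where "Rr = 3*t + 1"
  have t0: "t \<ge> 0" by (simp add: t_def)
  have contF: "continuous_on UNIV F" unfolding F_def by (intro continuous_intros)
  have F0: "F 0 = t^2" by (simp add: F_def t_def norm_mult power2_eq_square)
  have far: "F z > F 0" if "cmod z > Rr" for z
  proof -
    define c where "c = cmod z"
    have "norm (of_real ((cmod z)^2) :: 'k) \<le> F z + norm (\<xi>*\<xi>) + norm (of_real (2*Re z) * \<xi>)"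
    proof -
      define X where "X = \<xi>*\<xi> - of_real (2*Re z) * \<xi> + of_real ((cmod z)^2)"
      have "of_real ((cmod z)^2) = (X - \<xi>*\<xi>) + of_real (2*Re z) * \<xi>" by (simp add: X_def)
      then have "norm (of_real ((cmod z)^2) :: 'k) \<le> norm (X - \<xi>*\<xi>) + norm (of_real (2*Re z) * \<xi>)"
        by (metis norm_triangle_ineq)
      also have "norm (X - \<xi>*\<xi>) \<le> norm X + norm (\<xi>*\<xi>)" by (rule norm_triangle_ineq4)
      finally show ?thesis by (simp add: F_def X_def)
    qed
    then have "c^2 \<le> F z + t^2 + 2*\<bar>Re z\<bar>*t"
      by (simp add: c_def t_def norm_mult power2_eq_square)
    moreover have "\<bar>Re z\<bar> \<le> c" by (simp add: c_def abs_Re_le_cmod)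
    ultimately have "c^2 \<le> F z + t^2 + 2*c*t"
    proof -
      have "2*\<bar>Re z\<bar>*t \<le> 2*c*t" using \<open>\<bar>Re z\<bar> \<le> c\<close> t0 by (simp add: mult_right_mono)
      then show ?thesis using \<open>c^2 \<le> F z + t^2 + 2*\<bar>Re z\<bar>*t\<close> by linarith
    qed
    moreover have "c > 3*t+1" using that by (simp add: c_def Rr_def)
    ultimately have "F z > t^2"
    proof -
      assume A: "c^2 \<le> F z + t^2 + 2*c*t" and B: "c > 3*t+1"
      have "c*(c-2*t) \<ge> (3*t+1)*(t+1)" using B t0 by (intro mult_mono) auto
      moreover have "(3*t+1)*(t+1) = 3*t^2+4*t+1" by (simp add: algebra_simps power2_eq_square)
      ultimately have P: "c*(c-2*t) \<ge> 3*t^2+4*t+1" by simp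
      have "c^2 - t^2 - 2*c*t = c*(c-2*t) - t^2" by (simp add: algebra_simps power2_eq_square)
      then have "F z \<ge> c*(c-2*t) - t^2" using A by linarith
      then show ?thesis using P t0 zero_le_power2[of t] by linarith
    qed
    then show ?thesis by (simp add: F0)
  qed
  have "Rr \<ge> 0" using t0 by (simp add: Rr_def)
  have "\<exists>x\<in>cball (0::complex) Rr. \<forall>y\<in>cball 0 Rr. F x \<le> F y"
    by (rule continuous_attains_inf) (use \<open>Rr \<ge> 0\<close> in \<open>auto intro: continuous_on_subset[OF contF]\<close>)
  then obtain zm where zm: "zm \<in> cball 0 Rr" "\<And>y. y \<in> cball 0 Rr \<Longrightarrow> F zm \<le> F y"
    by blast
  define m where "m = F zm"
  have minF: "F z \<ge> m" for z
  proof (cases "cmod z \<le> Rr")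
    case True then show ?thesis using zm by (simp add: m_def)
  next
    case False
    then have "F z > F 0" using far by auto
    moreover have "F zm \<le> F 0" using zm \<open>Rr \<ge> 0\<close> by auto
    ultimately show ?thesis by (simp add: m_def)
  qed
  define S where "S = cball 0 Rr \<inter> {z. F z = m}"
  have "closed {z. F z = m}" by (rule closed_Collect_eq[OF contF]) simp
  then have cS: "compact S" unfolding S_def by (intro compact_Int_closed) auto
  have "zm \<in> S" using zm by (simp add: S_def m_def)
  then obtain z0 where z0: "z0 \<in> S" "\<And>y. y \<in> S \<Longrightarrow> cmod y \<le> cmod z0"
    using continuous_attains_sup[of S cmod] cS by (auto intro: continuous_intros)
  have maxz0: "cmod y \<le> cmod z0" if "F y = m" for y
  proof -
    have "cmod y \<le> Rr"
    proof (rule ccontr)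
      assume "\<not> cmod y \<le> Rr"
      then have "F y > F 0" using far by auto
      moreover have "F 0 \<ge> m" using minF by simp
      ultimately show False using that by simp
    qed
    then show ?thesis using z0 that by (simp add: S_def)
  qed
  have Fz0: "F z0 = m" using z0 by (simp add: S_def)
  have m0: "m \<ge> 0" by (simp add: m_def F_def)
  show ?thesis
  proof (cases "m = 0")
    case True then show ?thesis using Fz0 by (auto simp: F_def)
  next
    case False
    then have mpos: "m > 0" using m0 by simp
    define \<epsilon> where "\<epsilon> = m/2"
    have epos: "\<epsilon> > 0" using mpos by (simp add: \<epsilon>_def)
    define z1 where "z1 = Complex (Re z0) (sqrt ((Im z0)^2 + \<epsilon>))"
    have "(cmod z1)^2 = (cmod z0)^2 + \<epsilon>"
      using epos by (simp add: z1_def cmod_power2)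
    then have "cmod z1 > cmod z0" using epos
      by (metis less_add_same_cancel1 norm_ge_zero power_less_imp_less_base)
    then have "F z1 \<noteq> m" using maxz0 by force
    then have gt: "F z1 > m" using minF[of z1] by simp
    have ineq: "F z1 \<le> m * (1 + (1/2)^n)^2" if "n \<ge> 1" for n
    proof -
      have k: "F z1 * m^(2*n-1) \<le> (m^n + \<epsilon>^n)^2"
        using key_ineq[of n m \<xi> z0 \<epsilon>] that mpos Fz0 minF epos
        unfolding F_def z1_def by blast
      have e1: "(m^n + \<epsilon>^n)^2 = m^(2*n-1) * (m * (1 + (1/2)^n)^2)"
      proof -
        have "\<epsilon>^n = m^n * (1/2)^n" by (simp add: \<epsilon>_def power_divide)
        then have "(m^n + \<epsilon>^n)^2 = (m^n)^2 * (1 + (1/2)^n)^2"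
          by (simp add: power_mult_distrib[symmetric] algebra_simps)
        also have "(m^n)^2 = m^(2*n-1) * m"
        proof -
          have h: "2*n = Suc (2*n-1)" using that by simp
          have "(m^n)^2 = m^(2*n)" by (simp add: power_mult[symmetric] mult.commute)
          also have "\<dots> = m^(2*n-1) * m" by (subst h) (simp add: power_Suc2)
          finally show ?thesis .
        qed
        finally show ?thesis by (simp add: algebra_simps)
      qed
      have "0 < m^(2*n-1)" using mpos by simp
      then show ?thesis using k e1 by (simp add: mult.commute)
    qed
    have lim: "(\<lambda>n. m * (1 + (1/2::real)^n)^2) \<longlonglongrightarrow> m * (1 + 0)^2"
      by (intro tendsto_intros LIMSEQ_realpow_zero) auto
    have "F z1 \<le> m"
      using LIMSEQ_le_const[OF lim, of "F z1"] ineq by auto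
    then show ?thesis using gt by simp
  qed
qed


lemma quad_form:
  fixes \<xi> :: "'k::real_normed_field"
  shows "\<exists>a b. (\<xi> - of_real a) * (\<xi> - of_real a) = - (of_real b * of_real b)"
proof -
  obtain z where z: "\<xi>*\<xi> - of_real (2*Re z) * \<xi> + of_real ((cmod z)^2) = 0"
    using quad_root_exists by blast
  have "(\<xi> - of_real (Re z)) * (\<xi> - of_real (Re z)) = - (of_real (Im z) * of_real (Im z))"
  proof -
    have "(\<xi> - of_real (Re z)) * (\<xi> - of_real (Re z)) + of_real (Im z) * of_real (Im z)
          = \<xi>*\<xi> - of_real (2*Re z) * \<xi> + of_real ((cmod z)^2)"
    proof -
      have "(of_real ((cmod z)^2) :: 'k) = of_real (Re z) * of_real (Re z) + of_real (Im z) * of_real (Im z)"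
        by (subst cmod_power2) (simp add: power2_eq_square)
      then show ?thesis by (simp add: algebra_simps)
    qed
    then show ?thesis using z by (simp add: eq_neg_iff_add_eq_0)
  qed
  then show ?thesis by blast
qed

lemma k_param:
  "\<exists>h::complex \<Rightarrow> 'k::real_normed_field. continuous_on UNIV h \<and> (\<forall>\<xi>. \<exists>z. h z = \<xi> \<and> cmod z \<le> 2 * norm \<xi>)"
proof (cases "\<forall>\<xi>::'k. \<exists>r. \<xi> = of_real r")
  case True
  show ?thesis
  proof (intro exI[of _ "\<lambda>z. of_real (Re z)"] conjI allI)
    show "continuous_on UNIV (\<lambda>z. of_real (Re z) :: 'k)" by (intro continuous_intros)
    fix \<xi> :: 'k
    obtain r where r: "\<xi> = of_real r" using True by blast
    show "\<exists>z. of_real (Re z) = \<xi> \<and> cmod z \<le> 2 * norm \<xi>"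
      by (intro exI[of _ "complex_of_real r"]) (simp add: r)
  qed
next
  case False
  then obtain \<xi>0 :: 'k where nr: "\<And>r. \<xi>0 \<noteq> of_real r" by blast
  obtain a b where ab: "(\<xi>0 - of_real a) * (\<xi>0 - of_real a) = - (of_real b * of_real b)"
    using quad_form by blast
  have b0: "b \<noteq> 0"
  proof
    assume "b = 0"
    then have "\<xi>0 - of_real a = 0" using ab by simp
    then show False using nr[of a] by simp
  qed
  define j where "j = (\<xi>0 - of_real a) / of_real b"
  have jj: "j * j = -1" using ab b0 by (simp add: j_def field_simps)
  have nj: "norm j = 1"
  proof -
    have h: "norm j * norm j = 1" by (simp add: norm_mult[symmetric] jj)
    have "norm j = sqrt (norm j * norm j)" by simp
    then show ?thesis using h by simp
  qed
  have rep: "\<exists>u v. \<xi> = of_real u + of_real v * j" for \<xi> :: 'k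
  proof -
    obtain a' b' where ab': "(\<xi> - of_real a') * (\<xi> - of_real a') = - (of_real b' * of_real b')"
      using quad_form by blast
    show ?thesis
    proof (cases "b' = 0")
      case True
      then have "\<xi> = of_real a'" using ab' by simp
      then show ?thesis by (intro exI[of _ a'] exI[of _ 0]) simp
    next
      case False
      define w where "w = (\<xi> - of_real a') / of_real b'"
      have ww: "w * w = -1" using ab' False by (simp add: w_def field_simps)
      have "(w - j) * (w + j) = 0" using ww jj by (simp add: algebra_simps)
      then have "w = j \<or> w = -j" by (auto simp: eq_neg_iff_add_eq_0)
      then show ?thesis
      proof
        assume "w = j"
        then have "\<xi> = of_real a' + of_real b' * j" using False by (simp add: w_def field_simps)
        then show ?thesis by blast
      next
        assume "w = -j"
        then have "\<xi> = of_real a' + of_real (-b') * j" using False by (simp add: w_def field_simps)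
        then show ?thesis by blast
      qed
    qed
  qed
  show ?thesis
  proof (intro exI[of _ "\<lambda>z. of_real (Re z) + of_real (Im z) * j"] conjI allI)
    show "continuous_on UNIV (\<lambda>z. of_real (Re z) + of_real (Im z) * j :: 'k)" by (intro continuous_intros)
    fix \<xi> :: 'k
    obtain u v where uv: "\<xi> = of_real u + of_real v * j" using rep by blast
    define z where "z = Complex u v"
    have "\<xi> * (of_real u - of_real v * j) = of_real (u^2 + v^2)"
    proof -
      have jjx: "\<And>x. j * (j * x) = - x" using jj by (simp add: mult.assoc[symmetric])
      show ?thesis by (simp add: uv algebra_simps power2_eq_square jjx)
    qed
    then have "norm (\<xi> * (of_real u - of_real v * j)) = norm (of_real (u^2 + v^2) :: 'k)" by simp
    then have "norm \<xi> * norm (of_real u - of_real v * j :: 'k) = \<bar>u^2 + v^2\<bar>"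
      by (simp only: norm_mult norm_of_real)
    then have "norm \<xi> * norm (of_real u - of_real v * j :: 'k) = u^2 + v^2" by simp
    moreover have "norm (of_real u - of_real v * j :: 'k) \<le> \<bar>u\<bar> + \<bar>v\<bar>"
      using norm_triangle_ineq4[of "of_real u :: 'k" "of_real v * j"] nj by (simp add: norm_mult)
    moreover have "\<bar>u\<bar> + \<bar>v\<bar> \<le> 2 * cmod z"
      using abs_Re_le_cmod[of z] abs_Im_le_cmod[of z] by (simp add: z_def)
    moreover have "u^2 + v^2 = (cmod z)^2" by (simp add: z_def cmod_power2)
    ultimately have "(cmod z)^2 \<le> norm \<xi> * (2 * cmod z)"
      using mult_left_mono[of "norm (of_real u - of_real v * j :: 'k)" "2 * cmod z" "norm \<xi>"] by simp
    then have c2: "cmod z * cmod z \<le> (2 * norm \<xi>) * cmod z" by (simp add: power2_eq_square algebra_simps)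
    have "cmod z \<le> 2 * norm \<xi>"
    proof (cases "cmod z = 0")
      case False
      then have "cmod z > 0" by simp
      then show ?thesis using c2 mult_le_cancel_right[of "cmod z" "cmod z" "2 * norm \<xi>"] by simp
    qed simp
    then show "\<exists>z. of_real (Re z) + of_real (Im z) * j = \<xi> \<and> cmod z \<le> 2 * norm \<xi>"
      using uv by (intro exI[of _ z]) (simp add: z_def)
  qed
qed

lemma k_cball_compact: "compact (cball (0::'k::{real_normed_field,banach}) B)"
proof -
  obtain h :: "complex \<Rightarrow> 'k" where h: "continuous_on UNIV h" "\<And>\<xi>. \<exists>z. h z = \<xi> \<and> cmod z \<le> 2 * norm \<xi>"
    using k_param by blast
  have "cball 0 B \<subseteq> h ` cball 0 (2*B)"
  proof
    fix \<xi> :: 'k assume "\<xi> \<in> cball 0 B"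
    then have "norm \<xi> \<le> B" by simp
    obtain z where "h z = \<xi>" "cmod z \<le> 2 * norm \<xi>" using h(2) by blast
    then show "\<xi> \<in> h ` cball 0 (2*B)" using \<open>norm \<xi> \<le> B\<close> by force
  qed
  then have "cball 0 B = h ` cball 0 (2*B) \<inter> cball 0 B" by blast
  moreover have "compact (h ` cball 0 (2*B))"
    by (rule compact_continuous_image) (auto intro: continuous_on_subset[OF h(1)])
  ultimately show ?thesis by (metis compact_Int_closed closed_cball)
qed

lemma k_net:
  assumes "\<eta> > 0"
  shows "\<exists>C. finite C \<and> (\<forall>v::'k::{real_normed_field,banach}. norm v \<le> B \<longrightarrow> (\<exists>c\<in>C. norm (v - c) < \<eta>))"
proof -
  have "seq_compact (cball (0::'k) B)" by (rule compact_imp_seq_compact[OF k_cball_compact])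
  from seq_compact_imp_totally_bounded[OF this] assms obtain k where
    k: "finite k" "cball (0::'k) B \<subseteq> (\<Union>x\<in>k. ball x \<eta>)" by blast
  show ?thesis
  proof (intro exI[of _ k] conjI allI impI)
    fix v :: 'k assume "norm v \<le> B"
    then have "v \<in> cball 0 B" by simp
    then obtain c where "c \<in> k" "v \<in> ball c \<eta>" using k by blast
    then show "\<exists>c\<in>k. norm (v - c) < \<eta>" by (auto simp: dist_norm norm_minus_commute)
  qed (use k in auto)
qed

lemma k_BW:
  fixes s :: "nat \<Rightarrow> 'k::{real_normed_field,banach}"
  assumes "\<And>n. norm (s n) \<le> B"
  shows "\<exists>r. strict_mono r \<and> convergent (s \<circ> r)"
proof -
  have "seq_compact (cball (0::'k) B)" by (rule compact_imp_seq_compact[OF k_cball_compact])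
  then obtain l r where "strict_mono r" "(s \<circ> r) \<longlonglongrightarrow> l"
    using assms unfolding seq_compact_def by (metis mem_cball_0)
  then show ?thesis by (auto simp: convergent_def)
qed

lemma k_BW_finite:
  fixes x :: "'g \<Rightarrow> nat \<Rightarrow> 'k::{real_normed_field,banach}"
  assumes "finite G" "\<And>g. g \<in> G \<Longrightarrow> \<exists>B. \<forall>n. norm (x g n) \<le> B"
  shows "\<exists>r. strict_mono r \<and> (\<forall>g\<in>G. convergent (\<lambda>n. x g (r n)))"
  using assms
proof (induction G rule: finite_induct)
  case empty
  then show ?case by (intro exI[of _ id]) (auto simp: strict_mono_def)
next
  case (insert g G)
  obtain r where r: "strict_mono r" "\<forall>g\<in>G. convergent (\<lambda>n. x g (r n))" using insert by blast
  obtain B where B: "\<forall>n. norm (x g n) \<le> B" using insert.prems by blast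
  obtain r2 where r2: "strict_mono r2" "convergent ((\<lambda>n. x g (r n)) \<circ> r2)"
    using k_BW[of "\<lambda>n. x g (r n)" B] B by blast
  have "\<forall>g'\<in>G. convergent (\<lambda>n. x g' (r (r2 n)))"
  proof
    fix g' assume "g' \<in> G"
    then obtain l where "(\<lambda>n. x g' (r n)) \<longlonglongrightarrow> l" using r by (auto simp: convergent_def)
    from LIMSEQ_subseq_LIMSEQ[OF this r2(1)] show "convergent (\<lambda>n. x g' (r (r2 n)))"
      by (auto simp: convergent_def o_def)
  qed
  moreover have "strict_mono (r \<circ> r2)" using r r2 by (simp add: strict_mono_o)
  ultimately show ?case using r2(2) by (intro exI[of _ "r \<circ> r2"]) (auto simp: o_def)
qed



lemma zero_in_ball: "(\<lambda>x. 0) \<in> Lip0_ball p"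
  by (simp add: Lip0_ball_def lipschitz_on_def)

lemma ball_ne: "Lip0_ball p \<noteq> {}"
  using zero_in_ball by blast

lemma ball_in_Lip0: "g \<in> Lip0_ball p \<Longrightarrow> g \<in> Lip0 p"
  by (auto simp: Lip0_ball_def Lip0_def)

lemma Lip0I: "C-lipschitz_on UNIV w \<Longrightarrow> w p = 0 \<Longrightarrow> w \<in> Lip0 p"
  by (auto simp: Lip0_def)

lemma ball_bound:
  fixes g :: "'a::metric_space \<Rightarrow> 'k::real_normed_field"
  assumes "g \<in> Lip0_ball p" shows "norm (g x) \<le> dist x p"
proof -
  have h: "dist (g x) (g p) \<le> 1 * dist x p"
    using assms unfolding Lip0_ball_def lipschitz_on_def by blast
  have gp: "g p = 0" using assms by (simp add: Lip0_ball_def)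
  show ?thesis using h unfolding gp by (simp add: dist_norm)
qed

lemma dual_zero:
  assumes "\<phi> \<in> Lip0_dual p" shows "\<phi> (\<lambda>x. 0) = 0"
proof -
  have z: "(\<lambda>x. 0) \<in> Lip0 p" by (rule ball_in_Lip0[OF zero_in_ball])
  have "\<phi> (\<lambda>x. 1 * 0 + 0) = 1 * \<phi> (\<lambda>x. 0) + \<phi> (\<lambda>x. 0)"
    using assms z unfolding Lip0_dual_def by blast
  then show ?thesis by simp
qed

lemma dual_bdd:
  assumes "\<phi> \<in> Lip0_dual p"
  shows "bdd_above ((\<lambda>g. norm (\<phi> g)) ` Lip0_ball p)"
  using assms unfolding Lip0_dual_def bdd_above_def by fast

lemma dual_ball_le:
  assumes "\<phi> \<in> Lip0_dual p" "g \<in> Lip0_ball p"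
  shows "norm (\<phi> g) \<le> dual_norm p \<phi>"
  unfolding dual_norm_def by (rule cSUP_upper[OF assms(2) dual_bdd[OF assms(1)]])

lemma dual_norm_le:
  assumes "\<And>g. g \<in> Lip0_ball p \<Longrightarrow> norm (\<phi> g) \<le> B"
  shows "dual_norm p \<phi> \<le> B"
  unfolding dual_norm_def by (rule cSUP_least[OF ball_ne assms])

lemma dual_norm_nonneg:
  assumes "\<phi> \<in> Lip0_dual p" shows "dual_norm p \<phi> \<ge> 0"
  using dual_ball_le[OF assms zero_in_ball] by (meson norm_ge_zero order_trans)

lemma dual_lip_le:
  fixes w :: "'a::metric_space \<Rightarrow> 'k::real_normed_field"
  assumes phi: "\<phi> \<in> Lip0_dual p" and C: "C > 0" and lw: "C-lipschitz_on UNIV w" and w0: "w p = 0"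
  shows "norm (\<phi> w) \<le> C * dual_norm p \<phi>"
proof -
  define w' where "w' = (\<lambda>x. w x / of_real C)"
  have "1-lipschitz_on UNIV w'"
  proof (rule lipschitz_onI)
    fix x y :: 'a
    have "dist (w' x) (w' y) = dist (w x) (w y) / C"
      using C by (simp add: w'_def dist_norm diff_divide_distrib[symmetric] norm_divide)
    also have "\<dots> \<le> (C * dist x y) / C"
      using lw C by (intro divide_right_mono) (auto simp: lipschitz_on_def)
    finally show "dist (w' x) (w' y) \<le> 1 * dist x y" using C by simp
  qed simp
  then have wb: "w' \<in> Lip0_ball p" using w0 by (simp add: Lip0_ball_def w'_def)
  have lin: "\<phi> (\<lambda>x. of_real C * w' x + 0) = of_real C * \<phi> w' + \<phi> (\<lambda>x. 0)"
    using phi ball_in_Lip0[OF wb] ball_in_Lip0[OF zero_in_ball] unfolding Lip0_dual_def by blast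
  have "(\<lambda>x. of_real C * w' x + 0) = w" using C by (simp add: w'_def)
  then have "\<phi> w = of_real C * \<phi> w'" using lin dual_zero[OF phi] by simp
  then have "norm (\<phi> w) = C * norm (\<phi> w')" using C by (simp add: norm_mult)
  also have "\<dots> \<le> C * dual_norm p \<phi>"
    using dual_ball_le[OF phi wb] C by (simp add: mult_left_mono)
  finally show ?thesis .
qed

lemma dual_diff:
  assumes "\<phi> \<in> Lip0_dual p" "\<psi> \<in> Lip0_dual p"
  shows "\<phi> - \<psi> \<in> Lip0_dual p"
proof -
  obtain C1 where C1: "\<forall>g\<in>Lip0_ball p. norm (\<phi> g) \<le> C1" using assms(1) unfolding Lip0_dual_def by blast
  obtain C2 where C2: "\<forall>g\<in>Lip0_ball p. norm (\<psi> g) \<le> C2" using assms(2) unfolding Lip0_dual_def by blast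
  have "\<forall>g\<in>Lip0_ball p. norm ((\<phi> - \<psi>) g) \<le> C1 + C2"
    using C1 C2 by (auto intro: order_trans[OF norm_triangle_ineq4] add_mono)
  moreover have "(\<phi> - \<psi>) (\<lambda>x. c * g x + h x) = c * (\<phi> - \<psi>) g + (\<phi> - \<psi>) h"
    if "g \<in> Lip0 p" "h \<in> Lip0 p" for c g h
    using assms that unfolding Lip0_dual_def by (simp add: algebra_simps)
  ultimately show ?thesis unfolding Lip0_dual_def by blast
qed

lemma delta_span_dual:
  assumes "\<psi> \<in> delta_span" shows "(\<psi> :: ('a::metric_space \<Rightarrow> 'k::real_normed_field) \<Rightarrow> 'k) \<in> Lip0_dual p"
proof -
  obtain n :: nat and c xs where psi: "\<psi> = (\<lambda>g. \<Sum>i<n. c i * delta (xs i) g)"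
    using assms unfolding delta_span_def by blast
  have "\<forall>g\<in>Lip0_ball p. norm (\<psi> g) \<le> (\<Sum>i<n. norm (c i) * dist (xs i) p)"
  proof
    fix g :: "'a \<Rightarrow> 'k" assume g: "g \<in> Lip0_ball p"
    have "norm (\<psi> g) \<le> (\<Sum>i<n. norm (c i * g (xs i)))" by (simp add: psi delta_def norm_sum)
    also have "\<dots> \<le> (\<Sum>i<n. norm (c i) * dist (xs i) p)"
      using ball_bound[OF g] by (intro sum_mono) (simp add: norm_mult mult_left_mono)
    finally show "norm (\<psi> g) \<le> (\<Sum>i<n. norm (c i) * dist (xs i) p)" .
  qed
  moreover have "\<psi> (\<lambda>x. c' * g x + h x) = c' * \<psi> g + \<psi> h" for c' g h
    by (simp add: psi delta_def sum.distrib sum_distrib_left algebra_simps)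
  ultimately show ?thesis unfolding Lip0_dual_def by blast
qed


lemma comp_lip:
  assumes fL: "L-lipschitz_on UNIV f" and gD: "D-lipschitz_on UNIV g"
  shows "(D*L)-lipschitz_on UNIV (\<lambda>x. g (f x))"
  using lipschitz_on_compose2[OF fL lipschitz_on_subset[OF gD]] by simp

lemma lift_dual:
  fixes f :: "'a::metric_space \<Rightarrow> 'b::metric_space"
  assumes L: "L > 0" and fL: "L-lipschitz_on UNIV f" and base: "f p = q"
    and mu: "(\<mu> :: ('a \<Rightarrow> 'k::real_normed_field) \<Rightarrow> 'k) \<in> Lip0_dual p"
  shows "lift f \<mu> \<in> Lip0_dual q"
proof -
  have comp: "(\<lambda>x. g (f x)) \<in> Lip0 p" if gq: "g \<in> Lip0 q" for g :: "'b \<Rightarrow> 'k"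
  proof -
    obtain D where "D-lipschitz_on UNIV g" "g q = 0" using gq unfolding Lip0_def by blast
    then show ?thesis using comp_lip[OF fL] base by (auto simp: Lip0_def)
  qed
  have "lift f \<mu> (\<lambda>x. c * g x + h x) = c * lift f \<mu> g + lift f \<mu> h"
    if "g \<in> Lip0 q" "h \<in> Lip0 q" for c g h
  proof -
    have "\<mu> (\<lambda>x. c * g (f x) + h (f x)) = c * \<mu> (\<lambda>x. g (f x)) + \<mu> (\<lambda>x. h (f x))"
      using mu comp[OF that(1)] comp[OF that(2)] unfolding Lip0_dual_def by blast
    then show ?thesis by (simp add: lift_def o_def)
  qed
  moreover have "\<forall>g\<in>Lip0_ball q. norm (lift f \<mu> g) \<le> L * dual_norm p \<mu>"
  proof
    fix g :: "'b \<Rightarrow> 'k" assume g: "g \<in> Lip0_ball q"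
    have "1-lipschitz_on UNIV g" using g by (simp add: Lip0_ball_def)
    from comp_lip[OF fL this] have "(1*L)-lipschitz_on UNIV (\<lambda>x. g (f x))" .
    then show "norm (lift f \<mu> g) \<le> L * dual_norm p \<mu>"
      using dual_lip_le[OF mu L] g base by (simp add: lift_def o_def Lip0_ball_def)
  qed
  ultimately show ?thesis unfolding Lip0_dual_def by blast
qed

lemma lift_norm:
  fixes f :: "'a::metric_space \<Rightarrow> 'b::metric_space"
  assumes L: "L > 0" and fL: "L-lipschitz_on UNIV f" and base: "f p = q"
    and mu: "(\<mu> :: ('a \<Rightarrow> 'k::real_normed_field) \<Rightarrow> 'k) \<in> Lip0_dual p"
  shows "dual_norm q (lift f \<mu>) \<le> L * dual_norm p \<mu>"
proof (rule dual_norm_le)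
  fix g :: "'b \<Rightarrow> 'k" assume g: "g \<in> Lip0_ball q"
  have "1-lipschitz_on UNIV g" using g by (simp add: Lip0_ball_def)
  from comp_lip[OF fL this] have "(1*L)-lipschitz_on UNIV (\<lambda>x. g (f x))" .
  then show "norm (lift f \<mu> g) \<le> L * dual_norm p \<mu>"
    using dual_lip_le[OF mu L] g base by (simp add: lift_def o_def Lip0_ball_def)
qed

lemma lift_diff: "lift f \<mu> - lift f \<psi> = lift f (\<mu> - \<psi>)"
  by (simp add: lift_def fun_eq_iff)

lemma lift_span:
  assumes "\<psi> \<in> delta_span" shows "lift f \<psi> \<in> delta_span"
proof -
  obtain n :: nat and c xs where psi: "\<psi> = (\<lambda>g. \<Sum>i<n. c i * delta (xs i) g)"
    using assms unfolding delta_span_def by blast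
  have "lift f \<psi> = (\<lambda>g. \<Sum>i<n. c i * delta ((f \<circ> xs) i) g)"
    by (simp add: psi lift_def delta_def)
  then show ?thesis unfolding delta_span_def by blast
qed

lemma lift_Free:
  fixes f :: "'a::metric_space \<Rightarrow> 'b::metric_space"
  assumes L: "L > 0" and fL: "L-lipschitz_on UNIV f" and base: "f p = q"
    and mu: "(\<mu> :: ('a \<Rightarrow> 'k::real_normed_field) \<Rightarrow> 'k) \<in> FreeSp p"
  shows "lift f \<mu> \<in> FreeSp q"
proof -
  have mud: "\<mu> \<in> Lip0_dual p" using mu by (simp add: FreeSp_def)
  have "\<exists>\<psi>\<in>delta_span. dual_norm q (lift f \<mu> - \<psi>) < e" if e: "e > 0" for e
  proof -
    have "e / L > 0" using e L by simp
    then obtain \<psi> where psi: "\<psi> \<in> delta_span" "dual_norm p (\<mu> - \<psi>) < e / L"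
      using mu unfolding FreeSp_def by blast
    have d: "\<mu> - \<psi> \<in> Lip0_dual p" by (rule dual_diff[OF mud delta_span_dual[OF psi(1)]])
    have "dual_norm q (lift f \<mu> - lift f \<psi>) \<le> L * dual_norm p (\<mu> - \<psi>)"
      unfolding lift_diff by (rule lift_norm[OF L fL base d])
    also have "\<dots> < L * (e / L)" using psi(2) L by (intro mult_strict_left_mono) auto
    also have "L * (e / L) = e" using L by simp
    finally show ?thesis using lift_span[OF psi(1)] L by auto
  qed
  then show ?thesis using lift_dual[OF L fL base mud] by (simp add: FreeSp_def)
qed


lemma ball_lip:
  fixes g :: "'b::metric_space \<Rightarrow> 'k::real_normed_field"
  assumes "g \<in> Lip0_ball q" shows "norm (g a - g b) \<le> dist a b"
proof -
  have "dist (g a) (g b) \<le> 1 * dist a b"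
    using assms unfolding Lip0_ball_def lipschitz_on_def by blast
  then show ?thesis by (simp add: dist_norm)
qed

lemma far_flat:
  fixes f :: "'a::metric_space \<Rightarrow> 'b::metric_space"
  assumes L: "L > 0" and fL: "L-lipschitz_on UNIV f"
    and P4: "\<forall>\<epsilon>>0. \<exists>R>0. \<forall>x y. x \<noteq> y \<and> dist x p \<ge> R \<and> dist y p \<ge> R \<longrightarrow>
               dist (f x) (f y) \<le> \<epsilon> * dist x y"
    and eps: "\<epsilon> > 0"
  shows "\<exists>R'. \<forall>x y. x \<noteq> y \<and> (dist x p \<ge> R' \<or> dist y p \<ge> R') \<longrightarrow> dist (f x) (f y) \<le> 2*\<epsilon> * dist x y"
proof -
  from P4[rule_format, OF eps] obtain R where R0: "R > 0" and
    H: "\<forall>x y. x \<noteq> y \<and> dist x p \<ge> R \<and> dist y p \<ge> R \<longrightarrow> dist (f x) (f y) \<le> \<epsilon> * dist x y"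
    by blast
  have R2: "dist (f x) (f y) \<le> \<epsilon> * dist x y" if "x \<noteq> y" "dist x p \<ge> R" "dist y p \<ge> R" for x y
    using H that by blast
  note R = R0 R2
  have Lip: "dist (f a) (f b) \<le> L * dist a b" for a b
    using lipschitz_onD[OF fL] by blast
  show ?thesis
  proof (cases "\<exists>z0. dist z0 p \<ge> R")
    case False
    then show ?thesis by (intro exI[of _ R]) blast
  next
    case True
    then obtain z0 where z0: "dist z0 p \<ge> R" by blast
    define A where "A = R + dist z0 p"
    define R' where "R' = R + (\<epsilon>+L)*A/\<epsilon>"
    have A0: "A \<ge> 0" using R by (simp add: A_def)
    have RR': "R' \<ge> R" using A0 eps L by (simp add: R'_def)
    have one: "dist (f x) (f y) \<le> 2*\<epsilon> * dist x y" if xy: "x \<noteq> y" and xf: "dist x p \<ge> R'" for x y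
    proof (cases "dist y p \<ge> R")
      case True
      have xR: "dist x p \<ge> R" using xf RR' by linarith
      have "dist (f x) (f y) \<le> \<epsilon> * dist x y" using R(2)[OF xy xR True] .
      also have "\<dots> \<le> 2*\<epsilon> * dist x y" using eps by (simp add: mult_right_mono)
      finally show ?thesis .
    next
      case False
      define d where "d = dist x y"
      have "dist x p \<le> dist x y + dist y p" by (rule dist_triangle)
      then have dge: "d \<ge> (\<epsilon>+L)*A/\<epsilon>" using xf False unfolding d_def R'_def by linarith
      have "dist (f x) (f z0) \<le> \<epsilon> * dist x z0"
      proof (cases "x = z0")
        case False
        have xR: "dist x p \<ge> R" using xf RR' by linarith
        show ?thesis using R(2)[OF False xR z0] .
      qed simp
      also have "dist x z0 \<le> d + A"
      proof -
        have "dist x z0 \<le> dist x y + dist y z0" by (rule dist_triangle)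
        moreover have "dist y z0 \<le> dist y p + dist p z0" by (rule dist_triangle)
        ultimately show ?thesis using False by (simp add: d_def A_def dist_commute)
      qed
      then have "\<epsilon> * dist x z0 \<le> \<epsilon> * (d + A)" using eps by (simp add: mult_left_mono)
      finally have a1: "dist (f x) (f z0) \<le> \<epsilon> * (d + A)" .
      have "dist (f z0) (f y) \<le> L * dist z0 y" by (rule Lip)
      also have "dist z0 y \<le> A"
      proof -
        have "dist z0 y \<le> dist z0 p + dist p y" by (rule dist_triangle)
        then show ?thesis using False by (simp add: A_def dist_commute)
      qed
      then have "L * dist z0 y \<le> L * A" using L by (simp add: mult_left_mono)
      finally have a2: "dist (f z0) (f y) \<le> L * A" .
      have "(\<epsilon>+L)*A \<le> \<epsilon> * d" using dge eps by (simp add: pos_divide_le_eq mult.commute)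
      have "dist (f x) (f y) \<le> dist (f x) (f z0) + dist (f z0) (f y)" by (rule dist_triangle)
      also have "\<dots> \<le> \<epsilon> * d + (\<epsilon>+L)*A" using a1 a2 by (simp add: algebra_simps)
      also have "\<dots> \<le> 2*\<epsilon> * d" using \<open>(\<epsilon>+L)*A \<le> \<epsilon> * d\<close> by simp
      finally show ?thesis by (simp add: d_def)
    qed
    show ?thesis
    proof (intro exI[of _ R'] allI impI)
      fix x y assume h: "x \<noteq> y \<and> (R' \<le> dist x p \<or> R' \<le> dist y p)"
      then have xy: "x \<noteq> y" and "R' \<le> dist x p \<or> R' \<le> dist y p" by auto
      then show "dist (f x) (f y) \<le> 2 * \<epsilon> * dist x y"
      proof (elim disjE)
        assume "R' \<le> dist y p"
        from one[OF xy[symmetric] this] show ?thesis by (simp add: dist_commute)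
      qed (rule one[OF xy])
    qed
  qed
qed


lemma net_lemma:
  fixes f :: "'a::metric_space \<Rightarrow> 'b::metric_space"
  assumes L: "L > 0" and fL: "L-lipschitz_on UNIV f"
    and P1: "\<And>S. bounded S \<Longrightarrow> totally_bounded (f ` S)"
    and P2: "\<forall>\<epsilon>>0. \<exists>\<delta>>0. \<forall>x y. x \<noteq> y \<and> dist x y < \<delta> \<longrightarrow> dist (f x) (f y) \<le> \<epsilon> * dist x y"
    and P4: "\<forall>\<epsilon>>0. \<exists>R>0. \<forall>x y. x \<noteq> y \<and> dist x p \<ge> R \<and> dist y p \<ge> R \<longrightarrow>
               dist (f x) (f y) \<le> \<epsilon> * dist x y"
    and e: "e > 0"
  shows "\<exists>G. finite G \<and> G \<subseteq> (Lip0_ball q :: ('b \<Rightarrow> 'k::{real_normed_field,banach}) set) \<and>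
           (\<forall>g\<in>Lip0_ball q. \<exists>g'\<in>G. e-lipschitz_on UNIV (\<lambda>x. g (f x) - g' (f x)))"
proof -
  define \<epsilon> where "\<epsilon> = e / 4"
  have eps: "\<epsilon> > 0" using e by (simp add: \<epsilon>_def)
  from P2[rule_format, OF eps] obtain \<delta> where d0: "\<delta> > 0" and
    H: "\<forall>x y. x \<noteq> y \<and> dist x y < \<delta> \<longrightarrow> dist (f x) (f y) \<le> \<epsilon> * dist x y" by blast
  have near: "dist (f x) (f y) \<le> \<epsilon> * dist x y" if "x \<noteq> y" "dist x y < \<delta>" for x y
    using H that by blast
  obtain R' where HR: "\<forall>x y. x \<noteq> y \<and> (dist x p \<ge> R' \<or> dist y p \<ge> R') \<longrightarrow> dist (f x) (f y) \<le> 2*\<epsilon> * dist x y"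
    using far_flat[OF L fL P4 eps] by blast
  have far: "dist (f x) (f y) \<le> 2*\<epsilon> * dist x y" if "x \<noteq> y" "dist x p \<ge> R' \<or> dist y p \<ge> R'" for x y
    using HR that by blast
  define K where "K = f ` cball p R'"
  have tb: "totally_bounded K" unfolding K_def by (rule P1) simp
  define \<eta> where "\<eta> = e * \<delta> / 2"
  have eta: "\<eta> > 0" using e d0 by (simp add: \<eta>_def)
  obtain Z where Z: "finite Z" "K \<subseteq> (\<Union>z\<in>Z. {y. dist z y < \<eta>/4})"
    using tb eta unfolding totally_bounded_metric by (meson divide_pos_pos zero_less_numeral)
  define B where "B = (\<Sum>z\<in>Z. dist z q)"
  have zB: "dist z q \<le> B" if "z \<in> Z" for z
    unfolding B_def by (rule member_le_sum[OF that _ Z(1)]) simp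
  obtain C :: "'k set" where C: "finite C" "\<And>v. norm v \<le> B \<Longrightarrow> \<exists>c\<in>C. norm (v - c) < \<eta>/4"
    using k_net[of "\<eta>/4" B] eta by auto
  define \<Phi> where "\<Phi> = PiE Z (\<lambda>_. C)"
  have fPhi: "finite \<Phi>" unfolding \<Phi>_def using Z(1) C(1) by (simp add: finite_PiE)
  define good where "good = (\<lambda>\<phi>. \<exists>g\<in>(Lip0_ball q :: ('b \<Rightarrow> 'k) set). \<forall>z\<in>Z. norm (g z - \<phi> z) < \<eta>/4)"
  define pick where "pick = (\<lambda>\<phi>. SOME g. g \<in> (Lip0_ball q :: ('b \<Rightarrow> 'k) set) \<and> (\<forall>z\<in>Z. norm (g z - \<phi> z) < \<eta>/4))"
  have pick: "pick \<phi> \<in> Lip0_ball q \<and> (\<forall>z\<in>Z. norm (pick \<phi> z - \<phi> z) < \<eta>/4)" if gp: "good \<phi>" for \<phi>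
  proof -
    obtain g0 where g0: "g0 \<in> (Lip0_ball q :: ('b \<Rightarrow> 'k) set)" "\<forall>z\<in>Z. norm (g0 z - \<phi> z) < \<eta>/4"
      using gp unfolding good_def by blast
    show ?thesis
      using someI[of "\<lambda>g. g \<in> (Lip0_ball q :: ('b \<Rightarrow> 'k) set) \<and> (\<forall>z\<in>Z. norm (g z - \<phi> z) < \<eta>/4)" g0] g0
      unfolding pick_def by blast
  qed
  define G where "G = pick ` {\<phi>\<in>\<Phi>. good \<phi>}"
  have "finite G" unfolding G_def using fPhi by simp
  moreover have "G \<subseteq> Lip0_ball q" unfolding G_def using pick by blast
  moreover have "\<exists>g'\<in>G. e-lipschitz_on UNIV (\<lambda>x. g (f x) - g' (f x))" if g: "g \<in> Lip0_ball q" for g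
  proof -
    define \<phi> where "\<phi> = restrict (\<lambda>z. SOME c. c \<in> C \<and> norm (g z - c) < \<eta>/4) Z"
    have phz: "\<phi> z \<in> C \<and> norm (g z - \<phi> z) < \<eta>/4" if "z \<in> Z" for z
    proof -
      have "norm (g z) \<le> B" using ball_bound[OF g, of z] zB[OF that] by linarith
      then obtain c where "c \<in> C" "norm (g z - c) < \<eta>/4" using C(2) by blast
      then have "(SOME c. c \<in> C \<and> norm (g z - c) < \<eta>/4) \<in> C \<and> norm (g z - (SOME c. c \<in> C \<and> norm (g z - c) < \<eta>/4)) < \<eta>/4"
        using someI[of "\<lambda>c. c \<in> C \<and> norm (g z - c) < \<eta>/4" c] by blast
      then show ?thesis unfolding \<phi>_def using that by simp
    qed
    have "\<phi> \<in> \<Phi>" unfolding \<Phi>_def using phz by (auto simp: \<phi>_def PiE_def extensional_def)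
    moreover have "good \<phi>" unfolding good_def using g phz by blast
    ultimately have g'G: "pick \<phi> \<in> G" unfolding G_def by blast
    define g' where "g' = pick \<phi>"
    have g'b: "g' \<in> Lip0_ball q" and g'z: "\<And>z. z \<in> Z \<Longrightarrow> norm (g' z - \<phi> z) < \<eta>/4"
      using pick[OF \<open>good \<phi>\<close>] by (auto simp: g'_def)
    define u where "u = (\<lambda>y. g y - g' y)"
    have uK: "norm (u w) \<le> \<eta>" if wK: "w \<in> K" for w
    proof -
      obtain z where z: "z \<in> Z" "dist z w < \<eta>/4" using Z(2) wK by blast
      have "norm (g z - g' z) < \<eta>/2"
      proof -
        have "g z - g' z = (g z - \<phi> z) - (g' z - \<phi> z)" by simp
        then have "norm (g z - g' z) \<le> norm (g z - \<phi> z) + norm (g' z - \<phi> z)"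
          by (metis norm_triangle_ineq4)
        then show ?thesis using phz[OF z(1)] g'z[OF z(1)] by linarith
      qed
      moreover have "norm (g w - g z) \<le> dist w z" by (rule ball_lip[OF g])
      moreover have "norm (g' z - g' w) \<le> dist z w" by (rule ball_lip[OF g'b])
      moreover have "norm (u w) \<le> norm (g w - g z) + norm (g z - g' z) + norm (g' z - g' w)"
      proof -
        have "norm (u w) = norm ((g w - g z) + (g z - g' z) + (g' z - g' w))"
          by (rule arg_cong[where f=norm]) (simp add: u_def)
        moreover have "norm ((g w - g z) + (g z - g' z) + (g' z - g' w)) \<le> norm ((g w - g z) + (g z - g' z)) + norm (g' z - g' w)"
          by (rule norm_triangle_ineq)
        moreover have "norm ((g w - g z) + (g z - g' z)) \<le> norm (g w - g z) + norm (g z - g' z)"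
          by (rule norm_triangle_ineq)
        ultimately show ?thesis by linarith
      qed
      ultimately show ?thesis using z(2) by (simp add: dist_commute)
    qed
    have ulip: "norm (u a - u b) \<le> 2 * dist a b" for a b
    proof -
      have "u a - u b = (g a - g b) - (g' a - g' b)" by (simp add: u_def)
      then have "norm (u a - u b) \<le> norm (g a - g b) + norm (g' a - g' b)"
        by (metis norm_triangle_ineq4)
      then show ?thesis using ball_lip[OF g, of a b] ball_lip[OF g'b, of a b] by linarith
    qed
    have "e-lipschitz_on UNIV (\<lambda>x. u (f x))"
    proof (rule lipschitz_onI)
      fix x y :: 'a
      show "dist (u (f x)) (u (f y)) \<le> e * dist x y"
      proof (cases "x = y")
        case True then show ?thesis by simp
      next
        case xy: False
        have dd: "dist (u (f x)) (u (f y)) \<le> 2 * dist (f x) (f y)" using ulip by (simp add: dist_norm)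
        show ?thesis
        proof (cases "dist x y < \<delta>")
          case True
          have "2 * dist (f x) (f y) \<le> 2 * (\<epsilon> * dist x y)" using near[OF xy True] by simp
          also have "\<dots> \<le> e * dist x y" using e by (simp add: \<epsilon>_def mult_right_mono)
          finally show ?thesis using dd by linarith
        next
          case False
          show ?thesis
          proof (cases "dist x p \<ge> R' \<or> dist y p \<ge> R'")
            case True
            have "2 * dist (f x) (f y) \<le> 2 * (2*\<epsilon> * dist x y)" using far[OF xy True] by simp
            also have "\<dots> = e * dist x y" by (simp add: \<epsilon>_def)
            finally show ?thesis using dd by linarith
          next
            case inK: False
            have "f x \<in> K" "f y \<in> K" using inK by (auto simp: K_def dist_commute)
            then have "norm (u (f x)) \<le> \<eta>" "norm (u (f y)) \<le> \<eta>" using uK by auto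
            then have "dist (u (f x)) (u (f y)) \<le> 2 * \<eta>"
              using norm_triangle_ineq4[of "u (f x)" "u (f y)"] by (simp add: dist_norm)
            also have "2 * \<eta> = e * \<delta>" by (simp add: \<eta>_def)
            also have "e * \<delta> \<le> e * dist x y" using False e by (simp add: mult_left_mono)
            finally show ?thesis .
          qed
        qed
      qed
    qed (use e in simp)
    then show ?thesis using g'G by (auto simp: u_def g'_def)
  qed
  ultimately show ?thesis by blast
qed


lemma complete_lim:
  fixes S :: "nat \<Rightarrow> ('b::metric_space \<Rightarrow> 'k::{real_normed_field,banach}) \<Rightarrow> 'k"
  assumes SF: "\<And>n. S n \<in> FreeSp q"
    and Sb: "\<And>n g. g \<in> Lip0_ball q \<Longrightarrow> norm (S n g) \<le> B"
    and Ca: "\<And>e. e > 0 \<Longrightarrow> \<exists>N. \<forall>n\<ge>N. \<forall>m\<ge>N. dual_norm q (S n - S m) \<le> e"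
  shows "\<exists>\<nu>. \<nu> \<in> FreeSp q \<and> (\<lambda>n. dual_norm q (S n - \<nu>)) \<longlonglongrightarrow> 0"
proof -
  have Sd: "S n \<in> Lip0_dual q" for n using SF by (simp add: FreeSp_def)
  have conv: "(\<lambda>n. S n g) \<longlonglongrightarrow> lim (\<lambda>n. S n g)" if g: "g \<in> Lip0 q" for g
  proof -
    obtain D where D: "D-lipschitz_on UNIV g" and g0: "g q = 0" using g unfolding Lip0_def by blast
    have D0: "D \<ge> 0" using lipschitz_on_nonneg[OF D] .
    have D1: "(D+1)-lipschitz_on UNIV g"
    proof (rule lipschitz_onI)
      fix x y
      have "dist (g x) (g y) \<le> D * dist x y" using lipschitz_onD[OF D] by simp
      also have "\<dots> \<le> (D+1) * dist x y" by (simp add: mult_right_mono)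
      finally show "dist (g x) (g y) \<le> (D+1) * dist x y" .
    qed (use D0 in simp)
    have D1p: "D + 1 > 0" using D0 by simp
    have "Cauchy (\<lambda>n. S n g)"
    proof (rule metric_CauchyI)
      fix e :: real assume e: "e > 0"
      obtain N where N: "\<forall>n\<ge>N. \<forall>m\<ge>N. dual_norm q (S n - S m) \<le> e / (2*(D+1))"
        using Ca[of "e / (2*(D+1))"] e D1p by auto
      have "dist (S m g) (S n g) < e" if "m \<ge> N" "n \<ge> N" for m n
      proof -
        have "norm ((S m - S n) g) \<le> (D+1) * dual_norm q (S m - S n)"
          by (rule dual_lip_le[OF dual_diff[OF Sd Sd] D1p D1 g0])
        also have "\<dots> \<le> (D+1) * (e / (2*(D+1)))" using N that D1p by (intro mult_left_mono) auto
        also have "\<dots> = e / 2" using D1p by (simp add: field_simps)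
        also have "\<dots> < e" using e by simp
        finally show ?thesis by (simp add: dist_norm)
      qed
      then show "\<exists>M. \<forall>m\<ge>M. \<forall>n\<ge>M. dist (S m g) (S n g) < e" by blast
    qed
    then show ?thesis using Cauchy_convergent convergent_LIMSEQ_iff by blast
  qed
  define \<nu> where "\<nu> = (\<lambda>g. lim (\<lambda>n. S n g))"
  have conv': "(\<lambda>n. S n g) \<longlonglongrightarrow> \<nu> g" if "g \<in> Lip0 q" for g using conv[OF that] by (simp add: \<nu>_def)
  have lin: "\<nu> (\<lambda>x. c * g x + h x) = c * \<nu> g + \<nu> h" if g: "g \<in> Lip0 q" and h: "h \<in> Lip0 q" for c g h
  proof -
    have "(\<lambda>n. S n (\<lambda>x. c * g x + h x)) = (\<lambda>n. c * S n g + S n h)"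
      using Sd g h unfolding Lip0_dual_def by blast
    moreover have "(\<lambda>n. c * S n g + S n h) \<longlonglongrightarrow> c * \<nu> g + \<nu> h"
      by (intro tendsto_intros conv'[OF g] conv'[OF h])
    ultimately show ?thesis unfolding \<nu>_def by (simp add: limI)
  qed
  have nb: "norm (\<nu> g) \<le> B" if g: "g \<in> Lip0_ball q" for g
  proof -
    have "(\<lambda>n. norm (S n g)) \<longlonglongrightarrow> norm (\<nu> g)" by (intro tendsto_intros conv'[OF ball_in_Lip0[OF g]])
    then show ?thesis using Sb[OF g] by (intro LIMSEQ_le_const2) auto
  qed
  have nud: "\<nu> \<in> Lip0_dual q" unfolding Lip0_dual_def using lin nb by blast
  have close: "dual_norm q (S n - \<nu>) \<le> e" if e: "e > 0" and N: "\<forall>n\<ge>N. \<forall>m\<ge>N. dual_norm q (S n - S m) \<le> e" and n: "n \<ge> N" for e N n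
  proof (rule dual_norm_le)
    fix g :: "'b \<Rightarrow> 'k" assume g: "g \<in> Lip0_ball q"
    have "(\<lambda>m. norm (S n g - S m g)) \<longlonglongrightarrow> norm (S n g - \<nu> g)"
      by (intro tendsto_intros conv'[OF ball_in_Lip0[OF g]])
    moreover have "\<forall>m\<ge>N. norm (S n g - S m g) \<le> e"
    proof (intro allI impI)
      fix m assume "m \<ge> N"
      have "norm ((S n - S m) g) \<le> dual_norm q (S n - S m)" by (rule dual_ball_le[OF dual_diff[OF Sd Sd] g])
      then show "norm (S n g - S m g) \<le> e" using N n \<open>m \<ge> N\<close> by fastforce
    qed
    ultimately have "norm (S n g - \<nu> g) \<le> e" by (intro LIMSEQ_le_const2) auto
    then show "norm ((S n - \<nu>) g) \<le> e" by simp
  qed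
  have lim0: "(\<lambda>n. dual_norm q (S n - \<nu>)) \<longlonglongrightarrow> 0"
  proof (rule LIMSEQ_I)
    fix r :: real assume r: "r > 0"
    obtain N where N: "\<forall>n\<ge>N. \<forall>m\<ge>N. dual_norm q (S n - S m) \<le> r/2" using Ca[of "r/2"] r by auto
    have "norm (dual_norm q (S n - \<nu>) - 0) < r" if "n \<ge> N" for n
    proof -
      have "dual_norm q (S n - \<nu>) \<le> r/2" using close[of "r/2" N n] r N that by simp
      moreover have "dual_norm q (S n - \<nu>) \<ge> 0" by (rule dual_norm_nonneg[OF dual_diff[OF Sd nud]])
      ultimately show ?thesis using r by simp
    qed
    then show "\<exists>no. \<forall>n\<ge>no. norm (dual_norm q (S n - \<nu>) - 0) < r" by blast
  qed
  have "\<exists>\<psi>\<in>delta_span. dual_norm q (\<nu> - \<psi>) < e" if e: "e > 0" for e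
  proof -
    obtain n where n: "dual_norm q (S n - \<nu>) < e/2"
      using lim0 e unfolding LIMSEQ_def by (metis dist_0_norm dist_commute half_gt_zero le_refl real_norm_def abs_less_iff)
    have "e/2 > 0" using e by simp
    then obtain \<psi> where psi: "\<psi> \<in> delta_span" "dual_norm q (S n - \<psi>) < e/2"
      using SF[of n] unfolding FreeSp_def by blast
    have psid: "\<psi> \<in> Lip0_dual q" by (rule delta_span_dual[OF psi(1)])
    have "dual_norm q (\<nu> - \<psi>) \<le> dual_norm q (S n - \<nu>) + dual_norm q (S n - \<psi>)"
    proof (rule dual_norm_le)
      fix g :: "'b \<Rightarrow> 'k" assume g: "g \<in> Lip0_ball q"
      have a: "norm ((S n - \<nu>) g) \<le> dual_norm q (S n - \<nu>)" by (rule dual_ball_le[OF dual_diff[OF Sd nud] g])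
      have b: "norm ((S n - \<psi>) g) \<le> dual_norm q (S n - \<psi>)" by (rule dual_ball_le[OF dual_diff[OF Sd psid] g])
      have "(\<nu> - \<psi>) g = (S n - \<psi>) g - (S n - \<nu>) g" by simp
      then have "norm ((\<nu> - \<psi>) g) \<le> norm ((S n - \<psi>) g) + norm ((S n - \<nu>) g)"
        by (metis norm_triangle_ineq4)
      then show "norm ((\<nu> - \<psi>) g) \<le> dual_norm q (S n - \<nu>) + dual_norm q (S n - \<psi>)" using a b by linarith
    qed
    then show ?thesis using n psi by force
  qed
  then have "\<nu> \<in> FreeSp q" using nud by (simp add: FreeSp_def)
  then show ?thesis using lim0 by blast
qed


lemma lip_plus1:
  assumes D: "D-lipschitz_on U g" shows "(D+1)-lipschitz_on U g"
proof -
  have D0: "D \<ge> 0" using lipschitz_on_nonneg[OF D] .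
  show ?thesis
  proof (rule lipschitz_onI)
    fix x y assume "x \<in> U" "y \<in> U"
    then have "dist (g x) (g y) \<le> D * dist x y" using lipschitz_onD[OF D] by simp
    also have "\<dots> \<le> (D+1) * dist x y" by (simp add: mult_right_mono)
    finally show "dist (g x) (g y) \<le> (D+1) * dist x y" .
  qed (use D0 in simp)
qed

theorem corollary2p6:
  fixes f :: "'a::complete_space \<Rightarrow> 'b::complete_space"
    and p :: 'a and q :: 'b
  assumes lip: "\<exists>L. L-lipschitz_on UNIV f"
    and base: "f p = q"
    and P1: "\<And>S. bounded S \<Longrightarrow> totally_bounded (f ` S)"
    and P2: "\<forall>\<epsilon>>0. \<exists>\<delta>>0. \<forall>x y. x \<noteq> y \<and> dist x y < \<delta> \<longrightarrow> dist (f x) (f y) \<le> \<epsilon> * dist x y"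
    and P4: "\<forall>\<epsilon>>0. \<exists>R>0. \<forall>x y. x \<noteq> y \<and> dist x p \<ge> R \<and> dist y p \<ge> R \<longrightarrow>
               dist (f x) (f y) \<le> \<epsilon> * dist x y"
  shows "compact_free_op p q
           (lift f :: (('a \<Rightarrow> 'k::{real_normed_field,banach}) \<Rightarrow> 'k) \<Rightarrow> (('b \<Rightarrow> 'k) \<Rightarrow> 'k))"
proof -
  obtain L0 where L0: "L0-lipschitz_on UNIV f" using lip by blast
  define L where "L = L0 + 1"
  have fL: "L-lipschitz_on UNIV f" unfolding L_def by (rule lip_plus1[OF L0])
  have L: "L > 0" using lipschitz_on_nonneg[OF L0] by (simp add: L_def)
  have part1: "(lift f :: (('a \<Rightarrow> 'k) \<Rightarrow> 'k) \<Rightarrow> (('b \<Rightarrow> 'k) \<Rightarrow> 'k)) ` FreeSp p \<subseteq> FreeSp q"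
    using lift_Free[OF L fL base] by blast
  have part2: "\<exists>(r::nat \<Rightarrow> nat) \<nu>. strict_mono r \<and> \<nu> \<in> FreeSp q \<and>
           (\<lambda>n. dual_norm q (lift f (\<mu> (r n)) - \<nu>)) \<longlonglongrightarrow> 0"
    if mu: "\<forall>n. \<mu> n \<in> FreeSp p \<and> dual_norm p (\<mu> n) \<le> 1"
    for \<mu> :: "nat \<Rightarrow> ('a \<Rightarrow> 'k) \<Rightarrow> 'k"
  proof -
    define T where "T = (\<lambda>n. (lift f (\<mu> n) :: ('b \<Rightarrow> 'k) \<Rightarrow> 'k))"
    have muF: "\<mu> n \<in> FreeSp p" for n using mu by blast
    have mud: "\<mu> n \<in> Lip0_dual p" for n using muF by (simp add: FreeSp_def)
    have mun: "dual_norm p (\<mu> n) \<le> 1" for n using mu by blast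
    have TF: "T n \<in> FreeSp q" for n unfolding T_def by (rule lift_Free[OF L fL base muF])
    have Td: "T n \<in> Lip0_dual q" for n using TF by (simp add: FreeSp_def)
    have Tb: "norm (T n g) \<le> L" if g: "g \<in> Lip0_ball q" for n g
    proof -
      have "norm (T n g) \<le> dual_norm q (T n)" by (rule dual_ball_le[OF Td g])
      also have "\<dots> \<le> L * dual_norm p (\<mu> n)" unfolding T_def by (rule lift_norm[OF L fL base mud])
      also have "\<dots> \<le> L * 1" using mun L by (intro mult_left_mono) auto
      finally show ?thesis by simp
    qed
    have "\<forall>j. \<exists>G. finite G \<and> G \<subseteq> (Lip0_ball q :: ('b \<Rightarrow> 'k) set) \<and>
           (\<forall>g\<in>Lip0_ball q. \<exists>g'\<in>G. (1 / real (Suc j))-lipschitz_on UNIV (\<lambda>x. g (f x) - g' (f x)))"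
    proof
      fix j :: nat
      have "1 / real (Suc j) > 0" by simp
      from net_lemma[OF L fL P1 P2 P4 this]
      show "\<exists>G. finite G \<and> G \<subseteq> (Lip0_ball q :: ('b \<Rightarrow> 'k) set) \<and>
           (\<forall>g\<in>Lip0_ball q. \<exists>g'\<in>G. (1 / real (Suc j))-lipschitz_on UNIV (\<lambda>x. g (f x) - g' (f x)))" .
    qed
    then obtain Gs where Gs: "\<And>j. finite (Gs j)" "\<And>j. Gs j \<subseteq> (Lip0_ball q :: ('b \<Rightarrow> 'k) set)"
      "\<And>j g. g \<in> Lip0_ball q \<Longrightarrow> \<exists>g'\<in>Gs j. (1 / real (Suc j))-lipschitz_on UNIV (\<lambda>x. g (f x) - g' (f x))"
      by metis
    define P where "P = (\<lambda>j (s::nat \<Rightarrow> nat). \<forall>g\<in>Gs j. convergent (\<lambda>n. T (s n) g))"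
    interpret subseqs P
    proof
      fix j and s :: "nat \<Rightarrow> nat" assume "strict_mono s"
      have "\<exists>r. strict_mono r \<and> (\<forall>g\<in>Gs j. convergent (\<lambda>n. T (s (r n)) g))"
      proof (rule k_BW_finite[OF Gs(1)])
        fix g assume "g \<in> Gs j"
        then have "g \<in> Lip0_ball q" using Gs(2) by blast
        then show "\<exists>B. \<forall>n. norm (T (s n) g) \<le> B" using Tb by blast
      qed
      then show "\<exists>r'. strict_mono r' \<and> P j (s \<circ> r')" by (auto simp: P_def o_def)
    qed
    have stable: "P j (s \<circ> r)" if "strict_mono r" "P j s" for j s r
    proof -
      have "convergent (\<lambda>n. T ((s \<circ> r) n) g)" if g: "g \<in> Gs j" for g
      proof -
        obtain l where "(\<lambda>n. T (s n) g) \<longlonglongrightarrow> l" using \<open>P j s\<close> g by (auto simp: P_def convergent_def)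
        from LIMSEQ_subseq_LIMSEQ[OF this \<open>strict_mono r\<close>] show ?thesis by (auto simp: convergent_def o_def)
      qed
      then show ?thesis by (simp add: P_def)
    qed
    have conv: "convergent (\<lambda>n. T (diagseq n) g)" if g: "g \<in> Gs j" for j g
    proof -
      have "P j (diagseq \<circ> ((+) (Suc j)))" by (rule diagseq_holds) (rule stable)
      then obtain l where "(\<lambda>n. T (diagseq (Suc j + n)) g) \<longlonglongrightarrow> l" using g by (auto simp: P_def convergent_def)
      then have "(\<lambda>n. T (diagseq (n + Suc j)) g) \<longlonglongrightarrow> l" by (simp add: add.commute)
      then have "(\<lambda>n. T (diagseq n) g) \<longlonglongrightarrow> l" by (rule LIMSEQ_offset)
      then show ?thesis by (auto simp: convergent_def)
    qed
    define r where "r = diagseq"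
    have r: "strict_mono r" unfolding r_def by (rule subseq_diagseq)
    define S where "S = (\<lambda>n. T (r n))"
    have Ca: "\<exists>N. \<forall>n\<ge>N. \<forall>m\<ge>N. dual_norm q (S n - S m) \<le> e" if e: "e > 0" for e
    proof -
      have "e / 4 > 0" using e by simp
      then obtain j where j: "inverse (real (Suc j)) < e / 4" using reals_Archimedean by blast
      define a where "a = 1 / real (Suc j)"
      have a0: "a > 0" by (simp add: a_def)
      have ae: "a < e / 4" using j by (simp add: a_def inverse_eq_divide)
      have ev: "\<forall>g\<in>Gs j. eventually (\<lambda>nm. norm (S (fst nm) g - S (snd nm) g) < e/2) (sequentially \<times>\<^sub>F sequentially)"
      proof
        fix g assume g: "g \<in> Gs j"
        have "Cauchy (\<lambda>n. S n g)" using conv[OF g] by (simp add: S_def r_def convergent_Cauchy)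
        then obtain M where M: "\<forall>m\<ge>M. \<forall>n\<ge>M. dist (S m g) (S n g) < e/2"
          using metric_CauchyD[of "\<lambda>n. S n g" "e/2"] e by auto
        show "eventually (\<lambda>nm. norm (S (fst nm) g - S (snd nm) g) < e/2) (sequentially \<times>\<^sub>F sequentially)"
          unfolding eventually_prod_sequentially using M by (auto simp: dist_norm)
      qed
      have "eventually (\<lambda>nm. \<forall>g\<in>Gs j. norm (S (fst nm) g - S (snd nm) g) < e/2) (sequentially \<times>\<^sub>F sequentially)"
        by (rule eventually_ball_finite[OF Gs(1) ev])
      then obtain N where N: "\<And>m n g. m \<ge> N \<Longrightarrow> n \<ge> N \<Longrightarrow> g \<in> Gs j \<Longrightarrow> norm (S n g - S m g) < e/2"
        unfolding eventually_prod_sequentially by auto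
      have "dual_norm q (S n - S m) \<le> e" if n: "n \<ge> N" and m: "m \<ge> N" for n m
      proof (rule dual_norm_le)
        fix g :: "'b \<Rightarrow> 'k" assume g: "g \<in> Lip0_ball q"
        obtain g' where g': "g' \<in> Gs j" "a-lipschitz_on UNIV (\<lambda>x. g (f x) - g' (f x))"
          using Gs(3)[OF g, of j] by (auto simp: a_def)
        have g'b: "g' \<in> Lip0_ball q" using g' Gs(2) by blast
        define \<phi> where "\<phi> = \<mu> (r n) - \<mu> (r m)"
        have phid: "\<phi> \<in> Lip0_dual p" unfolding \<phi>_def by (rule dual_diff[OF mud mud])
        have phin: "dual_norm p \<phi> \<le> 2"
        proof (rule dual_norm_le)
          fix h :: "'a \<Rightarrow> 'k" assume h: "h \<in> Lip0_ball p"
          have "norm (\<mu> (r n) h) \<le> 1" using dual_ball_le[OF mud[of "r n"] h] mun[of "r n"] by linarith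
          moreover have "norm (\<mu> (r m) h) \<le> 1" using dual_ball_le[OF mud[of "r m"] h] mun[of "r m"] by linarith
          ultimately show "norm (\<phi> h) \<le> 2" using norm_triangle_ineq4[of "\<mu> (r n) h" "\<mu> (r m) h"]
            by (simp add: \<phi>_def)
        qed
        define w where "w = (\<lambda>x. g (f x) - g' (f x))"
        have w0: "w p = 0" using g g'b base by (simp add: w_def Lip0_ball_def)
        have wL: "w \<in> Lip0 p" using g'(2) w0 unfolding w_def by (intro Lip0I) auto
        have "1-lipschitz_on UNIV g'" using g'b by (simp add: Lip0_ball_def)
        from comp_lip[OF fL this] have "(1*L)-lipschitz_on UNIV (\<lambda>x. g' (f x))" .
        then have g'fL: "(\<lambda>x. g' (f x)) \<in> Lip0 p" using g'b base by (intro Lip0I) (auto simp: Lip0_ball_def)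
        have lin: "\<phi> (\<lambda>x. 1 * g' (f x) + w x) = 1 * \<phi> (\<lambda>x. g' (f x)) + \<phi> w"
          using phid g'fL wL unfolding Lip0_dual_def by blast
        have eqf: "(\<lambda>x. 1 * g' (f x) + w x) = (\<lambda>x. g (f x))" by (simp add: w_def)
        have "(S n - S m) g = \<phi> (\<lambda>x. g (f x))" by (simp add: S_def T_def lift_def o_def \<phi>_def)
        also have "\<dots> = \<phi> (\<lambda>x. g' (f x)) + \<phi> w" using lin eqf by simp
        also have "\<phi> (\<lambda>x. g' (f x)) = S n g' - S m g'" by (simp add: S_def T_def lift_def o_def \<phi>_def)
        finally have eq: "(S n - S m) g = (S n g' - S m g') + \<phi> w" .
        have wlip: "a-lipschitz_on UNIV w" using g'(2) by (simp add: w_def)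
        have "norm (\<phi> w) \<le> a * dual_norm p \<phi>"
          by (rule dual_lip_le[OF phid a0 wlip w0])
        also have "\<dots> \<le> a * 2" using phin a0 by (intro mult_left_mono) auto
        finally have pw: "norm (\<phi> w) \<le> a * 2" .
        have n1: "norm (S n g' - S m g') < e/2" using N[OF m n g'(1)] .
        have "norm ((S n - S m) g) \<le> norm (S n g' - S m g') + norm (\<phi> w)"
          unfolding eq by (rule norm_triangle_ineq)
        then show "norm ((S n - S m) g) \<le> e" using n1 pw ae by linarith
      qed
      then show ?thesis by blast
    qed
    have SF: "S n \<in> FreeSp q" for n by (simp add: S_def TF)
    have Sb: "norm (S n g) \<le> L" if "g \<in> Lip0_ball q" for n g using Tb[OF that] by (simp add: S_def)
    obtain \<nu> where nu: "\<nu> \<in> FreeSp q" "(\<lambda>n. dual_norm q (S n - \<nu>)) \<longlonglongrightarrow> 0"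
      using complete_lim[OF SF Sb Ca] by blast
    show ?thesis using r nu by (intro exI[of _ r] exI[of _ \<nu>]) (simp add: S_def T_def)
  qed
  show ?thesis unfolding compact_free_op_def using part1 part2 by blast
qed

end
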